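(* Let $f:(0,\infty)\to[0,\infty)$ be a convex continuous function with $f(1)=0$ such that for every $x\ne1$, $f$ is twice differentiable at $x$ with $f''(x)\ge0$, and $f'(x)<0$ for $0<x<1$, $f'(x)>0$ for $x>1$. Let $\nu,\mu$ be the Gibbs distributions of two Ising models on the same graph, both $b$-marginally bounded. Then $$D_f(\nu\|\mu)\ \ge\ \max\{f(1-d_{TV}(\nu,\mu)),\,f(1+d_{TV}(\nu,\mu))\}\ \ge\ \max\left\{f\left(1-\tfrac{b^2}{2}d_{\mathrm{par}}(\nu,\mu)\right),\,f\left(1+\tfrac{b^2}{2}d_{\mathrm{par}}(\nu,\mu)\right)\right\}.$$
   Context: An Ising model $(G,J,h)$ on $G=(V,E)$ consists of a symmetric $J\in\mathbb{R}^{V\times V}$ with $J_{uv}\ne0$ only if $\{u,v\}\in E$, and $h\in\mathbb{R}^V$; its Gibbs distribution on $\{-1,+1\}^V$ is $\mu(\sigma)\propto\exp(\tfrac12\sigma^TJ\sigma+h^T\sigma)$. $D_f(\nu\|\mu)=\sum_\sigma\mu(\sigma)f(\nu(\sigma)/\mu(\sigma))$ and $d_{TV}$ is the total variation distance. The parameter distance is $d_{\mathrm{par}}(\nu,\mu)=\max\left\{\max_{u,v}|J^\nu_{uv}-J^\mu_{uv}|,\ \max_{v\in V}\frac{|h^\nu(v)-h^\mu(v)|}{\deg(v)+1}\right\}$. $\mu$ is $b$-marginally bounded if for every $\Lambda\subseteq V$, pinning $\sigma\in\{-1,+1\}^\Lambda$, $v\notin\Lambda$, $c\in\{-1,+1\}$,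 the conditional marginal probability that $v$ takes value $c$ given $\sigma$ on $\Lambda$ is at least $b$. *)

theory Defs
  imports "HOL-Analysis.Analysis"
begin

text \<open>Vertices are the elements of a finite type 'v; the graph is given by a
symmetric irreflexive edge relation E.\<close>

definition simple_graph :: "('v \<Rightarrow> 'v \<Rightarrow> bool) \<Rightarrow> bool" where
  "simple_graph E \<longleftrightarrow> (\<forall>u v. E u v \<longrightarrow> E v u) \<and> (\<forall>v. \<not> E v v)"

definition deg :: "('v \<Rightarrow> 'v \<Rightarrow> bool) \<Rightarrow> 'v \<Rightarrow> nat" where
  "deg E v = card {u. E v u}"

definition ising_model :: "('v \<Rightarrow> 'v \<Rightarrow> bool) \<Rightarrow> ('v \<Rightarrow> 'v \<Rightarrow> real) \<Rightarrow> ('v \<Rightarrow> real) \<Rightarrow> bool" where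
  "ising_model E J h \<longleftrightarrow> simple_graph E \<and> (\<forall>u v. J u v = J v u) \<and> (\<forall>u v. J u v \<noteq> 0 \<longrightarrow> E u v)"

definition spins :: "('v \<Rightarrow> real) set" where
  "spins = {\<sigma>. \<forall>v. \<sigma> v \<in> {-1, 1}}"

definition gibbs_weight :: "('v::finite \<Rightarrow> 'v \<Rightarrow> real) \<Rightarrow> ('v \<Rightarrow> real) \<Rightarrow> ('v \<Rightarrow> real) \<Rightarrow> real" where
  "gibbs_weight J h \<sigma> = exp ((1/2) * (\<Sum>u\<in>UNIV. \<Sum>v\<in>UNIV. \<sigma> u * J u v * \<sigma> v) + (\<Sum>v\<in>UNIV. h v * \<sigma> v))"

definition gibbs :: "('v::finite \<Rightarrow> 'v \<Rightarrow> real) \<Rightarrow> ('v \<Rightarrow> real) \<Rightarrow> ('v \<Rightarrow> real) \<Rightarrow> real" where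
  "gibbs J h \<sigma> = (if \<sigma> \<in> spins then gibbs_weight J h \<sigma> / (\<Sum>\<tau>\<in>spins. gibbs_weight J h \<tau>) else 0)"

definition f_divergence :: "(real \<Rightarrow> real) \<Rightarrow> (('v \<Rightarrow> real) \<Rightarrow> real) \<Rightarrow> (('v \<Rightarrow> real) \<Rightarrow> real) \<Rightarrow> real" where
  "f_divergence f \<nu> \<mu> = (\<Sum>\<sigma>\<in>spins. \<mu> \<sigma> * f (\<nu> \<sigma> / \<mu> \<sigma>))"

definition d_TV :: "(('v \<Rightarrow> real) \<Rightarrow> real) \<Rightarrow> (('v \<Rightarrow> real) \<Rightarrow> real) \<Rightarrow> real" where
  "d_TV \<nu> \<mu> = (1/2) * (\<Sum>\<sigma>\<in>spins. \<bar>\<nu> \<sigma> - \<mu> \<sigma>\<bar>)"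

definition d_par :: "('v::finite \<Rightarrow> 'v \<Rightarrow> bool) \<Rightarrow> ('v \<Rightarrow> 'v \<Rightarrow> real) \<Rightarrow> ('v \<Rightarrow> real)
    \<Rightarrow> ('v \<Rightarrow> 'v \<Rightarrow> real) \<Rightarrow> ('v \<Rightarrow> real) \<Rightarrow> real" where
  "d_par E J1 h1 J2 h2 = max (Max {\<bar>J1 u v - J2 u v\<bar> | u v. True})
                             (Max {\<bar>h1 v - h2 v\<bar> / (real (deg E v) + 1) | v. True})"

definition cond_marginal :: "(('v \<Rightarrow> real) \<Rightarrow> real) \<Rightarrow> 'v set \<Rightarrow> ('v \<Rightarrow> real) \<Rightarrow> 'v \<Rightarrow> real \<Rightarrow> real" where
  "cond_marginal \<mu> \<Lambda> \<tau> v c =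
     (\<Sum>\<sigma>\<in>{\<sigma>\<in>spins. (\<forall>u\<in>\<Lambda>. \<sigma> u = \<tau> u) \<and> \<sigma> v = c}. \<mu> \<sigma>) /
     (\<Sum>\<sigma>\<in>{\<sigma>\<in>spins. \<forall>u\<in>\<Lambda>. \<sigma> u = \<tau> u}. \<mu> \<sigma>)"

definition marginally_bounded :: "real \<Rightarrow> (('v \<Rightarrow> real) \<Rightarrow> real) \<Rightarrow> bool" where
  "marginally_bounded b \<mu> \<longleftrightarrow>
     (\<forall>\<Lambda> \<tau> v c. \<tau> \<in> spins \<longrightarrow> v \<notin> \<Lambda> \<longrightarrow> c \<in> {-1, 1} \<longrightarrow> cond_marginal \<mu> \<Lambda> \<tau> v c \<ge> b)"

end

theory Submission
  imports Defs
begin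


definition fl :: "'v \<Rightarrow> ('v \<Rightarrow> real) \<Rightarrow> ('v \<Rightarrow> real)" where
  "fl v \<sigma> = \<sigma>(v := - \<sigma> v)"

lemma spins_finite: "finite (spins :: ('v::finite \<Rightarrow> real) set)"
proof -
  have "spins = (PiE UNIV (\<lambda>_::'v. {-1, 1::real}))"
    by (auto simp: spins_def PiE_UNIV_domain Pi_def)
  then show ?thesis using finite_PiE[of UNIV "\<lambda>_::'v. {-1,1::real}"] by simp
qed

lemma spins_ne: "(\<lambda>_. 1) \<in> spins"
  by (simp add: spins_def)

lemma fl_spins: "\<sigma> \<in> spins \<Longrightarrow> fl v \<sigma> \<in> spins"
  by (auto simp: spins_def fl_def)

lemma fl_fl[simp]: "fl v (fl v \<sigma>) = \<sigma>"
  by (auto simp: fl_def)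

lemma sum_fl: "(\<Sum>\<sigma>\<in>spins. g (fl v \<sigma>)) = (\<Sum>\<sigma>\<in>spins. (g \<sigma> :: real))"
  by (rule sum.reindex_bij_witness[where i="fl v" and j="fl v"]) (auto simp: fl_spins)

lemma spin_abs: "\<sigma> \<in> spins \<Longrightarrow> \<bar>\<sigma> u\<bar> = 1"
proof -
  assume "\<sigma> \<in> spins"
  then have "\<sigma> u = -1 \<or> \<sigma> u = 1" by (auto simp: spins_def)
  then show ?thesis by auto
qed

lemma sum_if_outer: "(\<Sum>(u::'v::finite)\<in>UNIV. \<Sum>w\<in>UNIV. if u = v then X u w else 0) = (\<Sum>w\<in>UNIV. (X v w :: real))"
proof -
  have "(\<Sum>u\<in>UNIV. \<Sum>w\<in>UNIV. if u = v then X u w else 0) = (\<Sum>u\<in>UNIV. if u = v then (\<Sum>w\<in>UNIV. X u w) else 0)"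
    by (rule sum.cong) auto
  then show ?thesis by simp
qed

lemma sum_fl_lin: "(\<Sum>(u::'v::finite)\<in>UNIV. c u * fl w \<sigma> u) = (\<Sum>u\<in>UNIV. c u * \<sigma> u) - 2 * c w * \<sigma> w"
proof -
  have "\<And>u. c u * fl w \<sigma> u = c u * \<sigma> u - (if u = w then 2 * c w * \<sigma> w else 0)"
    by (auto simp: fl_def)
  then show ?thesis by (simp add: sum_subtractf sum.delta sum.delta')
qed

lemma weight_pos: "gibbs_weight J h \<sigma> > 0"
  by (simp add: gibbs_weight_def)

lemma Z_pos: "(\<Sum>\<tau>\<in>spins. gibbs_weight J h \<tau>) > 0"
  by (rule sum_pos) (auto simp: spins_finite weight_pos intro: spins_ne)

lemma gibbs_pos: "\<sigma> \<in> spins \<Longrightarrow> gibbs J h \<sigma> > 0"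
  using Z_pos[of J h] by (simp add: gibbs_def weight_pos)

lemma gibbs_sum: "(\<Sum>\<sigma>\<in>spins. gibbs J h \<sigma>) = 1"
  using Z_pos[of J h] by (simp add: gibbs_def sum_divide_distrib[symmetric])

lemma ising_diag: "ising_model E J h \<Longrightarrow> J v v = 0"
  unfolding ising_model_def simple_graph_def by blast

lemma energy_flip:
  assumes "ising_model E J h" "\<sigma> \<in> spins"
  shows "ln (gibbs J h \<sigma> / gibbs J h (fl v \<sigma>)) = 2 * \<sigma> v * (h v + (\<Sum>u\<in>UNIV. J v u * \<sigma> u))"
proof -
  have sym: "\<And>u w. J u w = J w u" and d: "J v v = 0" using assms(1) ising_diag[OF assms(1)]
    by (auto simp: ising_model_def)
  define \<tau> where "\<tau> = fl v \<sigma>"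
  have t: "\<And>u. \<tau> u = \<sigma> u - (if u = v then 2 * \<sigma> v else 0)" by (auto simp: \<tau>_def fl_def)
  have Q: "(\<Sum>u\<in>UNIV. \<Sum>w\<in>UNIV. \<tau> u * J u w * \<tau> w) =
      (\<Sum>u\<in>UNIV. \<Sum>w\<in>UNIV. \<sigma> u * J u w * \<sigma> w) - 4 * \<sigma> v * (\<Sum>u\<in>UNIV. J v u * \<sigma> u)"
  proof -
    have e: "\<And>u w. \<tau> u * J u w * \<tau> w = \<sigma> u * J u w * \<sigma> w
         - (if u = v then 2 * \<sigma> v * J v w * \<sigma> w else 0)
         - (if w = v then 2 * \<sigma> v * J v u * \<sigma> u else 0)
"
      by (auto simp: t algebra_simps sym d)
    show ?thesis
      apply (simp only: e sum.distrib sum_subtractf sum_if_outer)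
      apply (simp add: sum.delta sum.delta' sum_distrib_left[symmetric] algebra_simps sym)
      apply (simp add: sum_distrib_left mult_ac)
      done
  qed
  have L: "(\<Sum>u\<in>UNIV. h u * \<tau> u) = (\<Sum>u\<in>UNIV. h u * \<sigma> u) - 2 * \<sigma> v * h v"
    using sum_fl_lin[of h v \<sigma>] by (simp add: \<tau>_def)
  have "gibbs J h \<sigma> / gibbs J h \<tau> = gibbs_weight J h \<sigma> / gibbs_weight J h \<tau>"
    using assms(2) fl_spins[OF assms(2), of v] Z_pos[of J h]
    by (simp add: gibbs_def \<tau>_def)
  also have "\<dots> = exp (2 * \<sigma> v * (h v + (\<Sum>u\<in>UNIV. J v u * \<sigma> u)))"
    unfolding gibbs_weight_def Q L exp_diff[symmetric]
    by (simp add: algebra_simps)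
  finally show ?thesis by (simp add: \<tau>_def)
qed

lemma cond_bound:
  assumes mb: "marginally_bounded b (gibbs J h)" and s: "\<sigma> \<in> spins"
  shows "b * (gibbs J h \<sigma> + gibbs J h (fl v \<sigma>)) \<le> gibbs J h \<sigma>"
proof -
  have sv: "\<sigma> v = -1 \<or> \<sigma> v = 1" using s by (auto simp: spins_def)
  have ne: "\<sigma> \<noteq> fl v \<sigma>"
  proof
    assume "\<sigma> = fl v \<sigma>"
    then have "\<sigma> v = - \<sigma> v" by (metis fl_def fun_upd_same)
    then show False using sv by auto
  qed
  have S1: "{\<rho>\<in>spins. (\<forall>u\<in>-{v}. \<rho> u = \<sigma> u) \<and> \<rho> v = \<sigma> v} = {\<sigma>}"
  proof (intro equalityI subsetI)
    fix \<rho> assume "\<rho> \<in> {\<rho>\<in>spins. (\<forall>u\<in>-{v}. \<rho> u = \<sigma> u) \<and> \<rho> v = \<sigma> v}"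
    then have "\<rho> = \<sigma>" by (auto intro!: ext)
    then show "\<rho> \<in> {\<sigma>}" by simp
  qed (use s in auto)
  have S2: "{\<rho>\<in>spins. \<forall>u\<in>-{v}. \<rho> u = \<sigma> u} = {\<sigma>, fl v \<sigma>}"
  proof (intro equalityI subsetI)
    fix \<rho> assume r: "\<rho> \<in> {\<rho>\<in>spins. \<forall>u\<in>-{v}. \<rho> u = \<sigma> u}"
    then have rv: "\<rho> v = -1 \<or> \<rho> v = 1" by (auto simp: spins_def)
    show "\<rho> \<in> {\<sigma>, fl v \<sigma>}"
    proof (cases "\<rho> v = \<sigma> v")
      case True
      then have "\<rho> = \<sigma>" using r by (auto intro!: ext)
      then show ?thesis by simp
    next
      case False
      then have "\<rho> v = - \<sigma> v" using rv sv by auto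
      then have "\<rho> = fl v \<sigma>" using r by (auto intro!: ext simp: fl_def)
      then show ?thesis by simp
    qed
  qed (use s fl_spins[OF s] in \<open>auto simp: fl_def split: if_splits\<close>)
  have "b \<le> cond_marginal (gibbs J h) (-{v}) \<sigma> v (\<sigma> v)"
    using mb s sv unfolding marginally_bounded_def by auto
  also have "\<dots> = gibbs J h \<sigma> / (gibbs J h \<sigma> + gibbs J h (fl v \<sigma>))"
    unfolding cond_marginal_def S1 S2 using ne by simp
  finally show ?thesis
    using gibbs_pos[OF s, of J h] gibbs_pos[OF fl_spins[OF s], of J h v]
    by (simp add: pos_le_divide_eq)
qed

lemma ln_diff_abs: fixes b x y :: real shows "0 < b \<Longrightarrow> b \<le> x \<Longrightarrow> b \<le> y \<Longrightarrow> \<bar>ln x - ln y\<bar> \<le> \<bar>x - y\<bar> / b"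
proof -
  assume a: "0 < b" "b \<le> x" "b \<le> y"
  have 1: "ln x - ln y \<le> (x - y) / y" using a ln_diff_le[of x y] by auto
  have 2: "ln y - ln x \<le> (y - x) / x" using a ln_diff_le[of y x] by auto
  show ?thesis
  proof (cases "x \<ge> y")
    case True
    have "(x - y) / y \<le> (x - y) / b" using a True by (intro divide_left_mono) auto
    moreover have "ln y \<le> ln x" using a True by simp
    ultimately show ?thesis using 1 True by auto
  next
    case False
    have "(y - x) / x \<le> (y - x) / b" using a False by (intro divide_left_mono) auto
    moreover have "ln x \<le> ln y" using a False by simp
    ultimately show ?thesis using 2 False by auto
  qed
qed

lemma L2:
  fixes A B A' B' :: real
  assumes "A > 0" "B > 0" "A' > 0" "B' > 0"
  shows "(A + B) * \<bar>A / (A + B) - A' / (A' + B')\<bar> \<le> \<bar>A - A'\<bar> + \<bar>B - B'\<bar>"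
proof -
  have n1: "A + B \<noteq> 0" "A' + B' \<noteq> 0" using assms by auto
  have e0: "(A + B) * (A / (A + B) - A' / (A' + B')) = A - (A + B) * A' / (A' + B')"
    using n1 by (simp add: right_diff_distrib)
  also have "\<dots> = (A * (A' + B') - (A + B) * A') / (A' + B')"
    using n1 by (simp add: diff_divide_distrib)
  also have "\<dots> = (A' * (B' - B) + B' * (A - A')) / (A' + B')"
    by (simp add: algebra_simps)
  finally have e: "(A + B) * (A / (A + B) - A' / (A' + B')) = (A' * (B' - B) + B' * (A - A')) / (A' + B')" .
  have "\<bar>A' * (B' - B) + B' * (A - A')\<bar> \<le> A' * \<bar>B - B'\<bar> + B' * \<bar>A - A'\<bar>"
    using assms by (simp add: abs_triangle_ineq[THEN order_trans] abs_mult abs_minus_commute)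
  also have "\<dots> \<le> (A' + B') * (\<bar>A - A'\<bar> + \<bar>B - B'\<bar>)"
    using assms by (simp add: algebra_simps)
  finally have "\<bar>(A' * (B' - B) + B' * (A - A')) / (A' + B')\<bar> \<le> \<bar>A - A'\<bar> + \<bar>B - B'\<bar>"
    using assms by (simp add: divide_le_eq mult.commute)
  then show ?thesis
    using assms by (simp add: e[symmetric] abs_mult)
qed

lemma pair_bound:
  fixes A B A' B' b :: real
  assumes pos: "A > 0" "B > 0" "A' > 0" "B' > 0" "b > 0"
    and bd: "b * (A + B) \<le> A" "b * (A + B) \<le> B" "b * (A' + B') \<le> A'" "b * (A' + B') \<le> B'"
  shows "b * (A + B) * \<bar>ln (A / B) - ln (A' / B')\<bar> \<le> 2 * (\<bar>A - A'\<bar> + \<bar>B - B'\<bar>)"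
proof -
  define p q p' q' where "p = A / (A + B)" "q = B / (A + B)" "p' = A' / (A' + B')" "q' = B' / (A' + B')"
  have bp: "b \<le> p" "b \<le> q" "b \<le> p'" "b \<le> q'"
    using pos bd by (auto simp: p_q_p'_q'_def pos_le_divide_eq)
  have "A + B > 0" "A' + B' > 0" using pos by auto
  then have "q = 1 - p" "q' = 1 - p'" by (simp_all add: p_q_p'_q'_def field_simps)
  then have qq: "q - q' = - (p - p')" by simp
  have r1: "ln (A / B) = ln p - ln q" using pos by (simp add: p_q_p'_q'_def ln_div)
  have r2: "ln (A' / B') = ln p' - ln q'" using pos by (simp add: p_q_p'_q'_def ln_div)
  have "\<bar>ln (A / B) - ln (A' / B')\<bar> \<le> \<bar>ln p - ln p'\<bar> + \<bar>ln q - ln q'\<bar>"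
    unfolding r1 r2 by linarith
  also have "\<dots> \<le> \<bar>p - p'\<bar> / b + \<bar>q - q'\<bar> / b"
    using bp pos by (intro add_mono ln_diff_abs) auto
  also have "\<dots> = 2 * \<bar>p - p'\<bar> / b" using qq by (simp add: abs_minus_commute add_divide_distrib[symmetric])
  finally have "b * \<bar>ln (A / B) - ln (A' / B')\<bar> \<le> 2 * \<bar>p - p'\<bar>"
    using pos by (simp add: le_divide_eq mult.commute)
  then have "b * (A + B) * \<bar>ln (A / B) - ln (A' / B')\<bar> \<le> (A + B) * (2 * \<bar>p - p'\<bar>)"
    using pos by (simp add: mult.assoc mult_left_mono)
  also have "\<dots> \<le> 2 * (\<bar>A - A'\<bar> + \<bar>B - B'\<bar>)"
    using L2[OF pos(1-4)] by (simp add: p_q_p'_q'_def)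
  finally show ?thesis .
qed

definition Gf :: "('v::finite \<Rightarrow> 'v \<Rightarrow> real) \<Rightarrow> ('v \<Rightarrow> real) \<Rightarrow> ('v \<Rightarrow> 'v \<Rightarrow> real) \<Rightarrow> ('v \<Rightarrow> real) \<Rightarrow> 'v \<Rightarrow> ('v \<Rightarrow> real) \<Rightarrow> real" where
  "Gf J1 h1 J2 h2 v \<sigma> = (h1 v - h2 v) + (\<Sum>u\<in>UNIV. (J1 v u - J2 v u) * \<sigma> u)"

lemma G_fl: "Gf J1 h1 J2 h2 v (fl w \<sigma>) = Gf J1 h1 J2 h2 v \<sigma> - 2 * (J1 v w - J2 v w) * \<sigma> w"
  unfolding Gf_def sum_fl_lin by simp

lemma G_H: "(h1 v + (\<Sum>u\<in>UNIV. J1 v u * \<sigma> u)) - (h2 v + (\<Sum>u\<in>UNIV. J2 v u * \<sigma> u))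
   = Gf J1 h1 J2 h2 v \<sigma>"
  unfolding Gf_def by (simp add: left_diff_distrib sum_subtractf)

lemma tv_G:
  assumes im1: "ising_model E J1 h1" and im2: "ising_model E J2 h2" and b: "b > 0"
    and mb1: "marginally_bounded b (gibbs J1 h1)" and mb2: "marginally_bounded b (gibbs J2 h2)"
  shows "b * (\<Sum>\<sigma>\<in>spins. gibbs J1 h1 \<sigma> * \<bar>Gf J1 h1 J2 h2 v \<sigma>\<bar>) \<le> 2 * d_TV (gibbs J1 h1) (gibbs J2 h2)"
proof -
  define \<nu> where "\<nu> = gibbs J1 h1"
  define \<mu> where "\<mu> = gibbs J2 h2"
  define G where "G = Gf J1 h1 J2 h2 v"
  have Gfl: "G (fl v \<sigma>) = G \<sigma>" for \<sigma>
    using ising_diag[OF im1, of v] ising_diag[OF im2, of v] by (simp add: G_def G_fl)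
  have per: "b * (\<nu> \<sigma> + \<nu> (fl v \<sigma>)) * \<bar>G \<sigma>\<bar> \<le> \<bar>\<nu> \<sigma> - \<mu> \<sigma>\<bar> + \<bar>\<nu> (fl v \<sigma>) - \<mu> (fl v \<sigma>)\<bar>"
    if s: "\<sigma> \<in> spins" for \<sigma>
  proof -
    have s': "fl v \<sigma> \<in> spins" using fl_spins[OF s] .
    have pb: "b * (\<nu> \<sigma> + \<nu> (fl v \<sigma>)) * \<bar>ln (\<nu> \<sigma> / \<nu> (fl v \<sigma>)) - ln (\<mu> \<sigma> / \<mu> (fl v \<sigma>))\<bar>
        \<le> 2 * (\<bar>\<nu> \<sigma> - \<mu> \<sigma>\<bar> + \<bar>\<nu> (fl v \<sigma>) - \<mu> (fl v \<sigma>)\<bar>)"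
    proof (rule pair_bound)
      show "0 < \<nu> \<sigma>" "0 < \<nu> (fl v \<sigma>)" "0 < \<mu> \<sigma>" "0 < \<mu> (fl v \<sigma>)" "0 < b"
        using s s' b by (auto simp: \<nu>_def \<mu>_def gibbs_pos)
      show "b * (\<nu> \<sigma> + \<nu> (fl v \<sigma>)) \<le> \<nu> \<sigma>" "b * (\<mu> \<sigma> + \<mu> (fl v \<sigma>)) \<le> \<mu> \<sigma>"
        using cond_bound[OF mb1 s] cond_bound[OF mb2 s] by (auto simp: \<nu>_def \<mu>_def)
      show "b * (\<nu> \<sigma> + \<nu> (fl v \<sigma>)) \<le> \<nu> (fl v \<sigma>)" "b * (\<mu> \<sigma> + \<mu> (fl v \<sigma>)) \<le> \<mu> (fl v \<sigma>)"
        using cond_bound[OF mb1 s', of v] cond_bound[OF mb2 s', of v] by (auto simp: \<nu>_def \<mu>_def add.commute)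
    qed
    have "ln (\<nu> \<sigma> / \<nu> (fl v \<sigma>)) - ln (\<mu> \<sigma> / \<mu> (fl v \<sigma>)) = 2 * \<sigma> v * G \<sigma>"
      unfolding \<nu>_def \<mu>_def energy_flip[OF im1 s] energy_flip[OF im2 s] G_def G_H[symmetric]
      by (simp add: algebra_simps)
    then have "\<bar>ln (\<nu> \<sigma> / \<nu> (fl v \<sigma>)) - ln (\<mu> \<sigma> / \<mu> (fl v \<sigma>))\<bar> = 2 * \<bar>G \<sigma>\<bar>"
      using spin_abs[OF s, of v] by (simp add: abs_mult)
    then show ?thesis using pb by simp
  qed
  have "b * (\<Sum>\<sigma>\<in>spins. (\<nu> \<sigma> + \<nu> (fl v \<sigma>)) * \<bar>G \<sigma>\<bar>)
      \<le> (\<Sum>\<sigma>\<in>spins. \<bar>\<nu> \<sigma> - \<mu> \<sigma>\<bar> + \<bar>\<nu> (fl v \<sigma>) - \<mu> (fl v \<sigma>)\<bar>)"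
    unfolding sum_distrib_left using per by (intro sum_mono) (simp add: mult.assoc)
  also have "\<dots> = 2 * (\<Sum>\<sigma>\<in>spins. \<bar>\<nu> \<sigma> - \<mu> \<sigma>\<bar>)"
    using sum_fl[of "\<lambda>\<sigma>. \<bar>\<nu> \<sigma> - \<mu> \<sigma>\<bar>" v] by (simp add: sum.distrib)
  also have "\<dots> = 4 * d_TV \<nu> \<mu>" by (simp add: d_TV_def)
  finally have 1: "b * (\<Sum>\<sigma>\<in>spins. (\<nu> \<sigma> + \<nu> (fl v \<sigma>)) * \<bar>G \<sigma>\<bar>) \<le> 4 * d_TV \<nu> \<mu>" .
  have "(\<Sum>\<sigma>\<in>spins. (\<nu> \<sigma> + \<nu> (fl v \<sigma>)) * \<bar>G \<sigma>\<bar>) = 2 * (\<Sum>\<sigma>\<in>spins. \<nu> \<sigma> * \<bar>G \<sigma>\<bar>)"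
    using sum_fl[of "\<lambda>\<sigma>. \<nu> \<sigma> * \<bar>G \<sigma>\<bar>" v] by (simp add: sum.distrib distrib_right Gfl)
  then show ?thesis using 1 by (simp add: \<nu>_def \<mu>_def G_def)
qed

lemma G_J:
  assumes b: "b > 0" and mb1: "marginally_bounded b (gibbs J1 h1)"
  shows "2 * b * \<bar>J1 v w - J2 v w\<bar> \<le> (\<Sum>\<sigma>\<in>spins. gibbs J1 h1 \<sigma> * \<bar>Gf J1 h1 J2 h2 v \<sigma>\<bar>)"
proof -
  define \<nu> where "\<nu> = gibbs J1 h1"
  define G where "G = Gf J1 h1 J2 h2 v"
  define d where "d = \<bar>J1 v w - J2 v w\<bar>"
  have per: "b * (\<nu> \<sigma> + \<nu> (fl w \<sigma>)) * (2 * d) \<le> \<nu> \<sigma> * \<bar>G \<sigma>\<bar> + \<nu> (fl w \<sigma>) * \<bar>G (fl w \<sigma>)\<bar>"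
    if s: "\<sigma> \<in> spins" for \<sigma>
  proof -
    have s': "fl w \<sigma> \<in> spins" using fl_spins[OF s] .
    have c1: "b * (\<nu> \<sigma> + \<nu> (fl w \<sigma>)) \<le> \<nu> \<sigma>" using cond_bound[OF mb1 s] by (simp add: \<nu>_def)
    have c2: "b * (\<nu> \<sigma> + \<nu> (fl w \<sigma>)) \<le> \<nu> (fl w \<sigma>)" using cond_bound[OF mb1 s', of w]
      by (simp add: \<nu>_def add.commute)
    have "2 * d = \<bar>G \<sigma> - G (fl w \<sigma>)\<bar>"
      using spin_abs[OF s, of w] by (simp add: G_def G_fl d_def abs_mult) (auto simp: abs_if)
    also have "\<dots> \<le> \<bar>G \<sigma>\<bar> + \<bar>G (fl w \<sigma>)\<bar>" by (rule abs_triangle_ineq4)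
    finally have dd: "2 * d \<le> \<bar>G \<sigma>\<bar> + \<bar>G (fl w \<sigma>)\<bar>" .
    have "b * (\<nu> \<sigma> + \<nu> (fl w \<sigma>)) * (2 * d) \<le> b * (\<nu> \<sigma> + \<nu> (fl w \<sigma>)) * (\<bar>G \<sigma>\<bar> + \<bar>G (fl w \<sigma>)\<bar>)"
      using dd b s s' by (intro mult_left_mono) (auto simp: \<nu>_def gibbs_pos add_nonneg_nonneg less_imp_le)
    also have "\<dots> = b * (\<nu> \<sigma> + \<nu> (fl w \<sigma>)) * \<bar>G \<sigma>\<bar> + b * (\<nu> \<sigma> + \<nu> (fl w \<sigma>)) * \<bar>G (fl w \<sigma>)\<bar>"
      by (rule distrib_left)
    also have "\<dots> \<le> \<nu> \<sigma> * \<bar>G \<sigma>\<bar> + \<nu> (fl w \<sigma>) * \<bar>G (fl w \<sigma>)\<bar>"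
      by (intro add_mono mult_right_mono c1 c2) auto
    finally show ?thesis .
  qed
  have "(\<Sum>\<sigma>\<in>spins. b * (\<nu> \<sigma> + \<nu> (fl w \<sigma>)) * (2 * d))
      \<le> (\<Sum>\<sigma>\<in>spins. \<nu> \<sigma> * \<bar>G \<sigma>\<bar> + \<nu> (fl w \<sigma>) * \<bar>G (fl w \<sigma>)\<bar>)"
    using per by (intro sum_mono) auto
  also have "\<dots> = 2 * (\<Sum>\<sigma>\<in>spins. \<nu> \<sigma> * \<bar>G \<sigma>\<bar>)"
    using sum_fl[of "\<lambda>\<sigma>. \<nu> \<sigma> * \<bar>G \<sigma>\<bar>" w] by (simp add: sum.distrib)
  finally have 1: "(\<Sum>\<sigma>\<in>spins. b * (\<nu> \<sigma> + \<nu> (fl w \<sigma>)) * (2 * d)) \<le> 2 * (\<Sum>\<sigma>\<in>spins. \<nu> \<sigma> * \<bar>G \<sigma>\<bar>)" .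
  have "(\<Sum>\<sigma>\<in>spins. b * (\<nu> \<sigma> + \<nu> (fl w \<sigma>)) * (2 * d)) = 2 * b * d * ((\<Sum>\<sigma>\<in>spins. \<nu> \<sigma>) + (\<Sum>\<sigma>\<in>spins. \<nu> (fl w \<sigma>)))"
    by (simp add: sum_distrib_left[symmetric] sum_distrib_right[symmetric] sum.distrib mult_ac)
  also have "\<dots> = 4 * b * d" using sum_fl[of \<nu> w] gibbs_sum[of J1 h1] by (simp add: \<nu>_def)
  finally show ?thesis using 1 by (simp add: \<nu>_def G_def d_def)
qed

lemma b_le_half:
  fixes J :: "'v::finite \<Rightarrow> 'v \<Rightarrow> real"
  assumes mb: "marginally_bounded b (gibbs J h)"
  shows "b \<le> 1/2"
proof -
  define v :: 'v where "v = undefined"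
  define \<sigma> :: "'v \<Rightarrow> real" where "\<sigma> = (\<lambda>_. 1)"
  have s: "\<sigma> \<in> spins" by (simp add: \<sigma>_def spins_def)
  have c1: "b * (gibbs J h \<sigma> + gibbs J h (fl v \<sigma>)) \<le> gibbs J h \<sigma>" by (rule cond_bound[OF mb s])
  have c2: "b * (gibbs J h \<sigma> + gibbs J h (fl v \<sigma>)) \<le> gibbs J h (fl v \<sigma>)"
    using cond_bound[OF mb fl_spins[OF s, of v], of v] by (simp add: add.commute)
  have p: "gibbs J h \<sigma> + gibbs J h (fl v \<sigma>) > 0"
    using gibbs_pos[OF s] gibbs_pos[OF fl_spins[OF s]] by (simp add: add_pos_pos)
  have "(2 * b) * (gibbs J h \<sigma> + gibbs J h (fl v \<sigma>)) \<le> 1 * (gibbs J h \<sigma> + gibbs J h (fl v \<sigma>))"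
    using c1 c2 by simp
  then have "2 * b \<le> 1" using p by (rule mult_right_le_imp_le)
  then show ?thesis by simp
qed

lemma tv_nonneg: "0 \<le> d_TV \<nu> \<mu>"
  by (simp add: d_TV_def sum_nonneg)

lemma J_bound:
  assumes im1: "ising_model E J1 h1" and im2: "ising_model E J2 h2" and b: "b > 0"
    and mb1: "marginally_bounded b (gibbs J1 h1)" and mb2: "marginally_bounded b (gibbs J2 h2)"
  shows "\<bar>J1 v w - J2 v w\<bar> \<le> d_TV (gibbs J1 h1) (gibbs J2 h2) / b\<^sup>2"
proof -
  have "b * (2 * b * \<bar>J1 v w - J2 v w\<bar>) \<le> b * (\<Sum>\<sigma>\<in>spins. gibbs J1 h1 \<sigma> * \<bar>Gf J1 h1 J2 h2 v \<sigma>\<bar>)"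
    using G_J[OF b mb1, of v w J2 h2] b by (intro mult_left_mono) auto
  also have "\<dots> \<le> 2 * d_TV (gibbs J1 h1) (gibbs J2 h2)" by (rule tv_G[OF im1 im2 b mb1 mb2])
  finally have "b\<^sup>2 * \<bar>J1 v w - J2 v w\<bar> \<le> d_TV (gibbs J1 h1) (gibbs J2 h2)"
    by (simp add: power2_eq_square mult_ac)
  then show ?thesis using b by (simp add: pos_le_divide_eq mult.commute)
qed

lemma h_bound:
  assumes im1: "ising_model E J1 h1" and im2: "ising_model E J2 h2" and b: "b > 0"
    and mb1: "marginally_bounded b (gibbs J1 h1)" and mb2: "marginally_bounded b (gibbs J2 h2)"
  shows "\<bar>h1 v - h2 v\<bar> \<le> (real (deg E v) + 1) * (2 * d_TV (gibbs J1 h1) (gibbs J2 h2) / b\<^sup>2)"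
proof -
  define \<nu> where "\<nu> = gibbs J1 h1"
  define T where "T = d_TV (gibbs J1 h1) (gibbs J2 h2) / b\<^sup>2"
  have T0: "T \<ge> 0" unfolding T_def by (intro divide_nonneg_nonneg tv_nonneg) simp
  have b1: "b \<le> 1" using b_le_half[OF mb1] by simp
  define S where "S = (\<Sum>u\<in>UNIV. \<bar>J1 v u - J2 v u\<bar>)"
  have pt: "\<bar>h1 v - h2 v\<bar> \<le> \<bar>Gf J1 h1 J2 h2 v \<sigma>\<bar> + S" if s: "\<sigma> \<in> spins" for \<sigma>
  proof -
    have "\<bar>\<Sum>u\<in>UNIV. (J1 v u - J2 v u) * \<sigma> u\<bar> \<le> (\<Sum>u\<in>UNIV. \<bar>(J1 v u - J2 v u) * \<sigma> u\<bar>)"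
      by (rule sum_abs)
    also have "\<dots> = S" using spin_abs[OF s] by (simp add: S_def abs_mult)
    finally show ?thesis unfolding Gf_def by linarith
  qed
  have "\<bar>h1 v - h2 v\<bar> = (\<Sum>\<sigma>\<in>spins. \<nu> \<sigma> * \<bar>h1 v - h2 v\<bar>)"
    using gibbs_sum[of J1 h1] by (simp add: \<nu>_def sum_distrib_right[symmetric])
  also have "\<dots> \<le> (\<Sum>\<sigma>\<in>spins. \<nu> \<sigma> * (\<bar>Gf J1 h1 J2 h2 v \<sigma>\<bar> + S))"
    using pt by (intro sum_mono mult_left_mono) (auto simp: \<nu>_def intro!: less_imp_le[OF gibbs_pos])
  also have "\<dots> = (\<Sum>\<sigma>\<in>spins. \<nu> \<sigma> * \<bar>Gf J1 h1 J2 h2 v \<sigma>\<bar>) + S"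
    using gibbs_sum[of J1 h1] by (simp add: \<nu>_def distrib_left sum.distrib sum_distrib_right[symmetric])
  finally have 1: "\<bar>h1 v - h2 v\<bar> \<le> (\<Sum>\<sigma>\<in>spins. \<nu> \<sigma> * \<bar>Gf J1 h1 J2 h2 v \<sigma>\<bar>) + S" .
  have "b * (\<Sum>\<sigma>\<in>spins. \<nu> \<sigma> * \<bar>Gf J1 h1 J2 h2 v \<sigma>\<bar>) \<le> 2 * (b\<^sup>2 * T)"
    using tv_G[OF im1 im2 b mb1 mb2, of v] b by (simp add: \<nu>_def T_def)
  then have "(\<Sum>\<sigma>\<in>spins. \<nu> \<sigma> * \<bar>Gf J1 h1 J2 h2 v \<sigma>\<bar>) \<le> 2 * b * T"
    using b by (simp add: power2_eq_square mult_ac)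
  also have "\<dots> \<le> 2 * T" using b1 T0 mult_right_le_one_le[of T b] b by (simp add: mult_ac)
  finally have 2: "(\<Sum>\<sigma>\<in>spins. \<nu> \<sigma> * \<bar>Gf J1 h1 J2 h2 v \<sigma>\<bar>) \<le> 2 * T" .
  have z: "\<bar>J1 v u - J2 v u\<bar> = 0" if "\<not> E v u" for u
    using im1 im2 that unfolding ising_model_def by force
  have "(\<Sum>u\<in>{u. E v u}. \<bar>J1 v u - J2 v u\<bar>) = S"
    unfolding S_def by (rule sum.mono_neutral_left) (auto simp: z)
  then have "S = (\<Sum>u\<in>{u. E v u}. \<bar>J1 v u - J2 v u\<bar>)" by simp
  also have "\<dots> \<le> real (card {u. E v u}) * T"
    using J_bound[OF im1 im2 b mb1 mb2, of v] by (intro sum_bounded_above) (simp add: T_def)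
  finally have 3: "S \<le> real (deg E v) * T" by (simp add: deg_def)
  have "real (deg E v) * T \<le> real (deg E v) * (2 * T)" using T0 by (intro mult_left_mono) auto
  then have "\<bar>h1 v - h2 v\<bar> \<le> (real (deg E v) + 1) * (2 * T)" using 1 2 3 by (simp add: algebra_simps)
  then show ?thesis by (simp add: T_def)
qed

lemma dpar_bound:
  assumes im1: "ising_model E J1 h1" and im2: "ising_model E J2 h2" and b: "b > 0"
    and mb1: "marginally_bounded b (gibbs J1 h1)" and mb2: "marginally_bounded b (gibbs J2 h2)"
  shows "d_par E J1 h1 J2 h2 \<le> 2 * d_TV (gibbs J1 h1) (gibbs J2 h2) / b\<^sup>2 \<and> 0 \<le> d_par E J1 h1 J2 h2"
proof -
  define T where "T = d_TV (gibbs J1 h1) (gibbs J2 h2) / b\<^sup>2"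
  have T0: "T \<ge> 0" unfolding T_def by (intro divide_nonneg_nonneg tv_nonneg) simp
  define SJ where "SJ = {\<bar>J1 u v - J2 u v\<bar> | u v. True}"
  define Sh where "Sh = {\<bar>h1 v - h2 v\<bar> / (real (deg E v) + 1) | v. True}"
  have SJe: "SJ = (\<lambda>(u, v). \<bar>J1 u v - J2 u v\<bar>) ` UNIV" unfolding SJ_def by auto
  have She: "Sh = (\<lambda>v. \<bar>h1 v - h2 v\<bar> / (real (deg E v) + 1)) ` UNIV" unfolding Sh_def by auto
  have fJ: "finite SJ" "SJ \<noteq> {}" unfolding SJe by auto
  have fh: "finite Sh" "Sh \<noteq> {}" unfolding She by auto
  have "\<forall>a\<in>SJ. a \<le> 2 * T"
  proof
    fix a assume "a \<in> SJ"
    then obtain u v where a: "a = \<bar>J1 u v - J2 u v\<bar>" by (auto simp: SJ_def)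
    have "a \<le> T" using J_bound[OF im1 im2 b mb1 mb2, of u v] by (simp add: a T_def)
    then show "a \<le> 2 * T" using T0 by linarith
  qed
  then have "Max SJ \<le> 2 * T" using Max_le_iff[OF fJ] by simp
  moreover have "\<forall>a\<in>Sh. a \<le> 2 * T"
    unfolding She
  proof (intro ballI, elim imageE)
    fix x v assume x: "x = \<bar>h1 v - h2 v\<bar> / (real (deg E v) + 1)"
    have "\<bar>h1 v - h2 v\<bar> \<le> (real (deg E v) + 1) * (2 * T)"
      using h_bound[OF im1 im2 b mb1 mb2, of v] by (simp add: T_def)
    then show "x \<le> 2 * T" unfolding x by (simp add: divide_le_eq mult.commute)
  qed
  then have "Max Sh \<le> 2 * T" using Max_le_iff[OF fh] by simp
  moreover have "0 \<le> Max SJ"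
  proof -
    have "\<forall>a\<in>SJ. 0 \<le> a" by (auto simp: SJ_def)
    then show ?thesis using Max_in[OF fJ] by blast
  qed
  ultimately show ?thesis unfolding d_par_def SJ_def[symmetric] Sh_def[symmetric] T_def
    by simp
qed

lemma tv_lt1:
  fixes J1 J2 :: "'v::finite \<Rightarrow> 'v \<Rightarrow> real"
  shows "d_TV (gibbs J1 h1) (gibbs J2 h2) < 1"
proof -
  have "(\<Sum>\<sigma>\<in>spins. \<bar>gibbs J1 h1 \<sigma> - gibbs J2 h2 \<sigma>\<bar>) < (\<Sum>\<sigma>\<in>spins. gibbs J1 h1 \<sigma> + gibbs J2 h2 \<sigma>)"
  proof (rule sum_strict_mono_ex1[OF spins_finite])
    show "\<forall>x\<in>spins. \<bar>gibbs J1 h1 x - gibbs J2 h2 x\<bar> \<le> gibbs J1 h1 x + gibbs J2 h2 x"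
    proof
      fix x :: "'v \<Rightarrow> real" assume x: "x \<in> spins"
      have "gibbs J1 h1 x > 0" "gibbs J2 h2 x > 0" using gibbs_pos[OF x] by auto
      then show "\<bar>gibbs J1 h1 x - gibbs J2 h2 x\<bar> \<le> gibbs J1 h1 x + gibbs J2 h2 x" by linarith
    qed
    show "\<exists>a\<in>spins. \<bar>gibbs J1 h1 a - gibbs J2 h2 a\<bar> < gibbs J1 h1 a + gibbs J2 h2 a"
      using gibbs_pos[OF spins_ne, of J1 h1] gibbs_pos[OF spins_ne, of J2 h2] spins_ne
      by (intro bexI[of _ "\<lambda>_. 1"]) (auto simp: abs_if)
  qed
  also have "\<dots> = 2" by (simp add: sum.distrib gibbs_sum)
  finally show ?thesis by (simp add: d_TV_def)
qed



lemma div_part: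
  fixes f :: "real \<Rightarrow> real" and J1 J2 :: "'v::finite \<Rightarrow> 'v \<Rightarrow> real"
  assumes conv: "convex_on {0<..} f" and fpos: "\<forall>x>0. f x \<ge> 0" and f1: "f 1 = 0"
  shows "f (1 + d_TV (gibbs J1 h1) (gibbs J2 h2)) \<le> f_divergence f (gibbs J1 h1) (gibbs J2 h2)
       \<and> f (1 - d_TV (gibbs J1 h1) (gibbs J2 h2)) \<le> f_divergence f (gibbs J1 h1) (gibbs J2 h2)"
proof -
  define \<nu> where "\<nu> = gibbs J1 h1"
  define \<mu> where "\<mu> = gibbs J2 h2"
  define \<delta> where "\<delta> = d_TV \<nu> \<mu>"
  have np: "\<nu> \<sigma> > 0" "\<mu> \<sigma> > 0" if "\<sigma> \<in> spins" for \<sigma>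
    using gibbs_pos[OF that] by (auto simp: \<nu>_def \<mu>_def)
  have s1: "(\<Sum>\<sigma>\<in>spins. \<nu> \<sigma>) = 1" "(\<Sum>\<sigma>\<in>spins. \<mu> \<sigma>) = 1"
    by (simp_all add: \<nu>_def \<mu>_def gibbs_sum)
  have sabs: "(\<Sum>\<sigma>\<in>spins. \<bar>\<nu> \<sigma> - \<mu> \<sigma>\<bar>) = 2 * \<delta>" by (simp add: \<delta>_def d_TV_def)
  have smax: "(\<Sum>\<sigma>\<in>spins. max (\<nu> \<sigma>) (\<mu> \<sigma>)) = 1 + \<delta>"
  proof -
    have "(\<Sum>\<sigma>\<in>spins. max (\<nu> \<sigma>) (\<mu> \<sigma>)) = (\<Sum>\<sigma>\<in>spins. (\<nu> \<sigma> + \<mu> \<sigma> + \<bar>\<nu> \<sigma> - \<mu> \<sigma>\<bar>) / 2)"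
      by (rule sum.cong) (auto simp: max_def)
    also have "\<dots> = 1 + \<delta>" by (simp add: sum_divide_distrib[symmetric] sum.distrib s1 sabs)
    finally show ?thesis .
  qed
  have smin: "(\<Sum>\<sigma>\<in>spins. min (\<nu> \<sigma>) (\<mu> \<sigma>)) = 1 - \<delta>"
  proof -
    have "(\<Sum>\<sigma>\<in>spins. min (\<nu> \<sigma>) (\<mu> \<sigma>)) = (\<Sum>\<sigma>\<in>spins. (\<nu> \<sigma> + \<mu> \<sigma> - \<bar>\<nu> \<sigma> - \<mu> \<sigma>\<bar>) / 2)"
      by (rule sum.cong) (auto simp: min_def)
    also have "\<dots> = 1 - \<delta>" by (simp add: sum_divide_distrib[symmetric] sum.distrib sum_subtractf s1 sabs)
    finally show ?thesis .
  qed
  have jensen: "f (\<Sum>\<sigma>\<in>spins. \<mu> \<sigma> * y \<sigma>) \<le> (\<Sum>\<sigma>\<in>spins. \<mu> \<sigma> * f (y \<sigma>))"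
    if y: "\<And>\<sigma> :: 'v \<Rightarrow> real. \<sigma> \<in> spins \<Longrightarrow> y \<sigma> > 0" for y
  proof -
    have ne: "(spins :: ('v \<Rightarrow> real) set) \<noteq> {}" using spins_ne by auto
    have h: "\<And>i :: 'v \<Rightarrow> real. i \<in> spins \<Longrightarrow> 0 \<le> \<mu> i" using np less_imp_le by blast
    have h2: "\<And>i :: 'v \<Rightarrow> real. i \<in> spins \<Longrightarrow> y i \<in> {0<..}" using y by auto
    from convex_on_sum[OF spins_finite ne conv s1(2) h h2] show ?thesis by simp
  qed
  have cmp: "(\<Sum>\<sigma>\<in>spins. \<mu> \<sigma> * f (y \<sigma>)) \<le> f_divergence f \<nu> \<mu>"
    if y: "\<And>\<sigma> :: 'v \<Rightarrow> real. \<sigma> \<in> spins \<Longrightarrow> y \<sigma> = \<nu> \<sigma> / \<mu> \<sigma> \<or> y \<sigma> = 1" for y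
    unfolding f_divergence_def
  proof (rule sum_mono)
    fix \<sigma> :: "'v \<Rightarrow> real" assume s: "\<sigma> \<in> spins"
    have "f (y \<sigma>) \<le> f (\<nu> \<sigma> / \<mu> \<sigma>)"
      using y[OF s] f1 fpos np[OF s] by auto
    then show "\<mu> \<sigma> * f (y \<sigma>) \<le> \<mu> \<sigma> * f (\<nu> \<sigma> / \<mu> \<sigma>)"
      using np[OF s] by (intro mult_left_mono) auto
  qed
  define y1 where "y1 \<sigma> = max (\<nu> \<sigma>) (\<mu> \<sigma>) / \<mu> \<sigma>" for \<sigma>
  define y2 where "y2 \<sigma> = min (\<nu> \<sigma>) (\<mu> \<sigma>) / \<mu> \<sigma>" for \<sigma>
  have "(\<Sum>\<sigma>\<in>spins. \<mu> \<sigma> * y1 \<sigma>) = 1 + \<delta>"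
    unfolding smax[symmetric] y1_def using np by (intro sum.cong) (auto simp: less_imp_neq[symmetric])
  moreover have "(\<Sum>\<sigma>\<in>spins. \<mu> \<sigma> * y2 \<sigma>) = 1 - \<delta>"
    unfolding smin[symmetric] y2_def using np by (intro sum.cong) (auto simp: less_imp_neq[symmetric])
  moreover have "f (\<Sum>\<sigma>\<in>spins. \<mu> \<sigma> * y1 \<sigma>) \<le> (\<Sum>\<sigma>\<in>spins. \<mu> \<sigma> * f (y1 \<sigma>))"
    using np by (intro jensen) (auto simp: y1_def max_def)
  moreover have "f (\<Sum>\<sigma>\<in>spins. \<mu> \<sigma> * y2 \<sigma>) \<le> (\<Sum>\<sigma>\<in>spins. \<mu> \<sigma> * f (y2 \<sigma>))"
    using np by (intro jensen) (auto simp: y2_def min_def)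
  moreover have "(\<Sum>\<sigma>\<in>spins. \<mu> \<sigma> * f (y1 \<sigma>)) \<le> f_divergence f \<nu> \<mu>"
    using np by (intro cmp) (auto simp: y1_def max_def)
  moreover have "(\<Sum>\<sigma>\<in>spins. \<mu> \<sigma> * f (y2 \<sigma>)) \<le> f_divergence f \<nu> \<mu>"
    using np by (intro cmp) (auto simp: y2_def min_def)
  ultimately show ?thesis by (simp add: \<nu>_def \<mu>_def \<delta>_def)
qed

lemma f_mono:
  fixes f :: "real \<Rightarrow> real"
  assumes conv: "convex_on {0<..} f" and fpos: "\<forall>x>0. f x \<ge> 0" and f1: "f 1 = 0"
    and t: "0 \<le> t" "t \<le> d" "d < 1"
  shows "f (1 - t) \<le> f (1 - d) \<and> f (1 + t) \<le> f (1 + d)"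
proof (cases "d = 0")
  case True
  then show ?thesis using t by simp
next
  case False
  then have d0: "d > 0" using t by simp
  define l where "l = t / d"
  have l: "0 \<le> l" "l \<le> 1" using t d0 by (auto simp: l_def divide_le_eq)
  have ld: "l * d = t" using d0 by (simp add: l_def)
  have e1: "(1 - l) *\<^sub>R 1 + l *\<^sub>R (1 - d) = 1 - t" using ld by (simp add: algebra_simps)
  have e2: "(1 - l) *\<^sub>R 1 + l *\<^sub>R (1 + d) = 1 + t" using ld by (simp add: algebra_simps)
  have "f (1 - t) \<le> (1 - l) * f 1 + l * f (1 - d)"
    using convex_onD[OF conv l, of 1 "1 - d"] t unfolding e1 by simp
  also have "\<dots> \<le> f (1 - d)" using f1 fpos t l mult_left_le_one_le[of "f (1 - d)" l] by simp
  finally have 1: "f (1 - t) \<le> f (1 - d)" .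
  have "f (1 + t) \<le> (1 - l) * f 1 + l * f (1 + d)"
    using convex_onD[OF conv l, of 1 "1 + d"] t unfolding e2 by simp
  also have "\<dots> \<le> f (1 + d)" using f1 fpos t l mult_left_le_one_le[of "f (1 + d)" l] by simp
  finally show ?thesis using 1 by simp
qed


theorem lemma3p3:
  fixes f :: "real \<Rightarrow> real"
    and E :: "'v::finite \<Rightarrow> 'v \<Rightarrow> bool"
    and J1 J2 :: "'v \<Rightarrow> 'v \<Rightarrow> real" and h1 h2 :: "'v \<Rightarrow> real" and b :: real
  assumes "convex_on {0<..} f"
    and "continuous_on {0<..} f"
    and "\<forall>x>0. f x \<ge> 0"
    and "f 1 = 0"
    and "\<forall>x>0. x \<noteq> 1 \<longrightarrow> f differentiable (at x) \<and> deriv f differentiable (at x)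
                         \<and> deriv (deriv f) x \<ge> 0"
    and "\<forall>x. 0 < x \<and> x < 1 \<longrightarrow> deriv f x < 0"
    and "\<forall>x>1. deriv f x > 0"
    and "ising_model E J1 h1" and "ising_model E J2 h2"
    and "b > 0"
    and "marginally_bounded b (gibbs J1 h1)" and "marginally_bounded b (gibbs J2 h2)"
  shows "f_divergence f (gibbs J1 h1) (gibbs J2 h2)
           \<ge> max (f (1 - d_TV (gibbs J1 h1) (gibbs J2 h2))) (f (1 + d_TV (gibbs J1 h1) (gibbs J2 h2)))
       \<and> max (f (1 - d_TV (gibbs J1 h1) (gibbs J2 h2))) (f (1 + d_TV (gibbs J1 h1) (gibbs J2 h2)))
           \<ge> max (f (1 - b\<^sup>2 / 2 * d_par E J1 h1 J2 h2)) (f (1 + b\<^sup>2 / 2 * d_par E J1 h1 J2 h2))"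
proof -
  note conv = assms(1) and fpos = assms(3) and f1 = assms(4)
  note im1 = assms(8) and im2 = assms(9) and b = assms(10) and mb1 = assms(11) and mb2 = assms(12)
  define \<delta> where "\<delta> = d_TV (gibbs J1 h1) (gibbs J2 h2)"
  define t where "t = b\<^sup>2 / 2 * d_par E J1 h1 J2 h2"
  have D: "f (1 + \<delta>) \<le> f_divergence f (gibbs J1 h1) (gibbs J2 h2)"
          "f (1 - \<delta>) \<le> f_divergence f (gibbs J1 h1) (gibbs J2 h2)"
    using div_part[OF conv fpos f1, of J1 h1 J2 h2] by (auto simp: \<delta>_def)
  have dp: "d_par E J1 h1 J2 h2 \<le> 2 * \<delta> / b\<^sup>2" "0 \<le> d_par E J1 h1 J2 h2"
    using dpar_bound[OF im1 im2 b mb1 mb2] by (auto simp: \<delta>_def)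
  have t0: "0 \<le> t" using dp b by (simp add: t_def)
  have "t \<le> b\<^sup>2 / 2 * (2 * \<delta> / b\<^sup>2)" unfolding t_def using dp b
    by (intro mult_left_mono) auto
  also have "\<dots> = \<delta>" using b by simp
  finally have td: "t \<le> \<delta>" .
  have d1: "\<delta> < 1" using tv_lt1 by (simp add: \<delta>_def)
  have M: "f (1 - t) \<le> f (1 - \<delta>) \<and> f (1 + t) \<le> f (1 + \<delta>)"
    by (rule f_mono[OF conv fpos f1 t0 td d1])
  show ?thesis using D M unfolding \<delta>_def[symmetric] t_def[symmetric] by auto
qed

end
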